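(* For every $n$ there is an instance of $P2\|C_{\max}$ with $3n+1$ jobs and an initial schedule from which a sequence of improving 3-swaps, each interchanging exactly three jobs between the two machines, has length $2^{\Omega(n)}$ before a 3-swap optimal solution is reached; i.e., the number of improving 3-swaps until a 3-swap optimal solution is reached can be $2^{\Omega(n)}$.
   Context: Problem $P2\|C_{\max}$: jobs with processing times $p_j>0$, two identical machines. A schedule $\sigma=(M_1,M_2)$ partitions the jobs into the sets processed on machines 1 and 2; loads $L_i=\sum_{j\in M_i}p_j$, makespan $\max_iL_i$. A 3-swap (in this statement) chooses $k'$ jobs on one machine and $k''$ jobs on the other with $k'+k''=3$ and interchanges their machine assignments; it is improving if the makespan strictly decreases. A 3-swap optimal solution is a schedule admitting no improving 3-swap. *)

theory Defs
  imports Complex_Main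
begin

text \<open>Jobs are 0,...,m-1 with processing times p j. A schedule is given by the set M1
of jobs on machine 1; machine 2 gets the remaining jobs {0..<m} - M1.\<close>

definition load :: "(nat \<Rightarrow> real) \<Rightarrow> nat set \<Rightarrow> real" where
  "load p M = (\<Sum>j\<in>M. p j)"

definition makespan :: "nat \<Rightarrow> (nat \<Rightarrow> real) \<Rightarrow> nat set \<Rightarrow> real" where
  "makespan m p M1 = max (load p M1) (load p ({0..<m} - M1))"

definition is_schedule :: "nat \<Rightarrow> nat set \<Rightarrow> bool" where
  "is_schedule m M1 \<longleftrightarrow> M1 \<subseteq> {0..<m}"

definition three_swap :: "nat \<Rightarrow> nat set \<Rightarrow> nat set \<Rightarrow> bool" where
  "three_swap m M1 M1' \<longleftrightarrow>
     (\<exists>A B. A \<subseteq> M1 \<and> B \<subseteq> {0..<m} - M1 \<and> card A + card B = 3 \<and>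
            M1' = (M1 - A) \<union> B)"

definition improving_three_swap :: "nat \<Rightarrow> (nat \<Rightarrow> real) \<Rightarrow> nat set \<Rightarrow> nat set \<Rightarrow> bool" where
  "improving_three_swap m p M1 M1' \<longleftrightarrow>
     three_swap m M1 M1' \<and> makespan m p M1' < makespan m p M1"

definition three_swap_optimal :: "nat \<Rightarrow> (nat \<Rightarrow> real) \<Rightarrow> nat set \<Rightarrow> bool" where
  "three_swap_optimal m p M1 \<longleftrightarrow> \<not> (\<exists>M1'. improving_three_swap m p M1 M1')"

end

theory Submission imports Defs begin

definition good :: "nat \<Rightarrow> nat set \<Rightarrow> nat set \<Rightarrow> bool" where
  "good K A B \<longleftrightarrow> A \<subseteq> {..<K} \<and> B \<subseteq> {..<K} \<and> card ((A - B) \<union> (B - A)) = 3 \<and>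
     (\<exists>t\<in>A - B. \<forall>j\<in>B - A. j < t)"

lemma good_mono: "good K A B \<Longrightarrow> K \<le> K' \<Longrightarrow> good K' A B"
  unfolding good_def by auto

lemma good_pow_mono: "(good K ^^ n) A B \<Longrightarrow> K \<le> K' \<Longrightarrow> (good K' ^^ n) A B"
  using relpowp_mono[of "good K" "good K'"] good_mono by blast

lemma good_lift:
  assumes "good K A B" "K \<le> x" "x < K'"
  shows "good K' (insert x A) (insert x B)"
proof -
  have xa: "x \<notin> A" "x \<notin> B" using assms unfolding good_def by auto
  have "insert x A - insert x B = A - B" "insert x B - insert x A = B - A" using xa by auto
  then show ?thesis using assms unfolding good_def by auto
qed

lemma good_pow_lift:
  "(good K ^^ n) A B \<Longrightarrow> K \<le> x \<Longrightarrow> x < K' \<Longrightarrow> (good K' ^^ n) (insert x A) (insert x B)"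
proof (induction n arbitrary: B)
  case 0 then show ?case by simp
next
  case (Suc n)
  then obtain C where "(good K ^^ n) A C" "good K C B" by auto
  then show ?case using Suc good_lift by (meson relpowp_Suc_I)
qed

lemma sub01: "J \<subseteq> {0,1::nat} \<Longrightarrow> J = {} \<or> J = {0} \<or> J = {1} \<or> J = {0,1}"
  by blast

lemma base3: "J \<subseteq> {0,1} \<Longrightarrow> good 3 (insert 2 J) ({0,1} - J)"
  apply (drule sub01) apply (elim disjE) apply (auto simp: good_def eval_nat_numeral insert_Diff_if)
  done

lemma step4: "J \<subseteq> {0,1} \<Longrightarrow> \<exists>J'. J' \<subseteq> {0,1} \<and> good 4 (insert 3 J) (insert 2 J')"
  apply (drule sub01) apply (elim disjE)
  apply (rule exI[of _ "{0}"]; auto simp: good_def eval_nat_numeral insert_Diff_if)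
  apply (rule exI[of _ "{}"]; auto simp: good_def eval_nat_numeral insert_Diff_if)
  apply (rule exI[of _ "{0,1}"]; auto simp: good_def eval_nat_numeral insert_Diff_if)
  apply (rule exI[of _ "{1}"]; auto simp: good_def eval_nat_numeral insert_Diff_if)
  done


lemma step5:
  assumes "J \<subseteq> {0,1}" "5 \<le> k"
  shows "good k (insert (k-1) J) (insert (k-2) (insert (k-3) J))"
proof -
  have d1: "insert (k-1) J - insert (k-2) (insert (k-3) J) = {k-1}" using assms by auto
  have d2: "insert (k-2) (insert (k-3) J) - insert (k-1) J = {k-2, k-3}" using assms by auto
  have c: "card {k-1, k-2, k-3} = 3" using assms by (simp add: card_insert_if; arith)
  have e: "{k-1} \<union> {k-2, k-3} = {k-1, k-2, k-3}" by auto
  show ?thesis unfolding good_def d1 d2 e c using assms by auto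
qed

lemma main:
  "3 \<le> k \<Longrightarrow> J \<subseteq> {0,1} \<Longrightarrow>
   \<exists>n J'. J' \<subseteq> {0,1} \<and> (good k ^^ n) (insert (k-1) J) J' \<and> 2 ^ ((k-3) div 2) \<le> n"
proof (induction k arbitrary: J rule: less_induct)
  case (less k)
  show ?case
  proof (cases "k = 3")
    case True
    then show ?thesis using base3[OF less.prems(2)] by (intro exI[of _ 1] exI[of _ "{0,1} - J"]) auto
  next
    case k3: False
    show ?thesis
    proof (cases "k = 4")
      case True
      obtain J1 where J1: "J1 \<subseteq> {0,1}" "good 4 (insert 3 J) (insert 2 J1)"
        using step4[OF less.prems(2)] by blast
      have "good 4 (insert 2 J1) ({0,1} - J1)" using base3[OF J1(1)] good_mono by force
      then have "(good 4 ^^ 2) (insert 3 J) ({0,1} - J1)" using J1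
        by (metis One_nat_def numeral_2_eq_2 relpowp_1 relpowp_Suc_I2)
      then show ?thesis using True by (intro exI[of _ 2] exI[of _ "{0,1} - J1"]) auto
    next
      case False
      then have k5: "5 \<le> k" using k3 less.prems by auto
      have "k-2 < k" "3 \<le> k-2" using k5 by auto
      then have "\<exists>n J'. J' \<subseteq> {0,1} \<and> (good (k-2) ^^ n) (insert (k-2-1) J) J' \<and> 2 ^ ((k-2-3) div 2) \<le> n"
        using less.IH[of "k-2" J] less.prems by blast
      then obtain n1 J1 where h1: "J1 \<subseteq> {0,1}" "(good (k-2) ^^ n1) (insert (k-2-1) J) J1"
          "2 ^ ((k-2-3) div 2) \<le> n1" by blast
      have "k-1 < k" "3 \<le> k-1" using k5 by auto
      then have "\<exists>n J'. J' \<subseteq> {0,1} \<and> (good (k-1) ^^ n) (insert (k-1-1) J1) J' \<and> 2 ^ ((k-1-3) div 2) \<le> n"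
        using less.IH[of "k-1" J1] h1 by blast
      then obtain n2 J2 where h2: "J2 \<subseteq> {0,1}" "(good (k-1) ^^ n2) (insert (k-1-1) J1) J2"
          "2 ^ ((k-1-3) div 2) \<le> n2" by blast
      have a1: "(good k ^^ n1) (insert (k-2) (insert (k-3) J)) (insert (k-2) J1)"
        using good_pow_lift[OF h1(2), of "k-2" k] k5 by (simp add: numeral_eq_Suc)
      have a2: "(good k ^^ n2) (insert (k-2) J1) J2"
        using good_pow_mono[OF h2(2), of k] k5 by (simp add: numeral_eq_Suc)
      have "(good k ^^ Suc n1) (insert (k-1) J) (insert (k-2) J1)"
        using relpowp_Suc_I2[OF step5[OF less.prems(2) k5] a1] .
      then have ch: "(good k ^^ (Suc n1 + n2)) (insert (k-1) J) J2"
        using a2 relpowp_add by (metis relcomppI)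
      have "(2::nat) ^ ((k-3) div 2) = 2 * 2 ^ ((k-5) div 2)"
      proof -
        have "(k-3) div 2 = Suc ((k-5) div 2)" using k5 by presburger
        then show ?thesis by simp
      qed
      also have "\<dots> \<le> n1 + n2"
      proof -
        have "(2::nat) ^ ((k-5) div 2) \<le> 2 ^ ((k-4) div 2)" by (rule power_increasing) auto
        moreover have "k-2-3 = k-5" "k-1-3 = k-4" by auto
        then have "2 ^ ((k-5) div 2) \<le> n1" "2 ^ ((k-4) div 2) \<le> n2" using h1(3) h2(3) by metis+
        ultimately show ?thesis by linarith
      qed
      finally show ?thesis using ch h2(1) by (intro exI[of _ "Suc n1 + n2"] exI[of _ J2]) auto
    qed
  qed
qed


lemma geo: "(\<Sum>j<k. (2::real)^j) = 2^k - 1"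
  by (induction k) auto

lemma load_le: "B \<subseteq> {..<t} \<Longrightarrow> load (\<lambda>j. (2::real)^j) B \<le> 2^t - 1"
  unfolding load_def using sum_mono2[of "{..<t}" B "\<lambda>j. (2::real)^j"] geo[of t] by auto

lemma load_nonneg: "0 \<le> load (\<lambda>j. (2::real)^j) B"
  unfolding load_def by (simp add: sum_nonneg)

lemma makespan_eq:
  assumes "A \<subseteq> {..<K}"
  shows "makespan (Suc K) (\<lambda>j. 2^j) (insert K A) = 2^K + load (\<lambda>j. 2^j) A"
proof -
  have fin: "finite A" using assms finite_subset by blast
  have KA: "K \<notin> A" using assms by auto
  have l1: "load (\<lambda>j. 2^j) (insert K A) = 2^K + load (\<lambda>j. 2^j) A"
    unfolding load_def using fin KA by simp
  have "{0..<Suc K} - insert K A \<subseteq> {..<K}" by auto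
  then have "load (\<lambda>j. 2^j) ({0..<Suc K} - insert K A) \<le> 2^K - 1" by (rule load_le)
  then show ?thesis unfolding makespan_def l1 using load_nonneg[of A] by simp
qed

lemma good_less:
  assumes "good K A B"
  shows "load (\<lambda>j. (2::real)^j) B < load (\<lambda>j. 2^j) A"
proof -
  from assms obtain t where t: "t \<in> A - B" "\<forall>j\<in>B - A. j < t" and sub: "A \<subseteq> {..<K}" "B \<subseteq> {..<K}"
    unfolding good_def by blast
  have fA: "finite A" "finite B" using sub finite_subset by auto
  have eA: "load (\<lambda>j. (2::real)^j) A = load (\<lambda>j. 2^j) (B \<inter> A) + load (\<lambda>j. 2^j) (A - B)"
    unfolding load_def using sum.Int_Diff[OF fA(1), of _ B] by (simp add: Int_commute)
  have eB: "load (\<lambda>j. (2::real)^j) B = load (\<lambda>j. 2^j) (B \<inter> A) + load (\<lambda>j. 2^j) (B - A)"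
    unfolding load_def using sum.Int_Diff[OF fA(2), of _ A] by simp
  have "(2::real)^t \<le> load (\<lambda>j. 2^j) (A - B)"
    unfolding load_def using t(1) fA by (intro member_le_sum) auto
  moreover have "load (\<lambda>j. (2::real)^j) (B - A) \<le> 2^t - 1"
    using t(2) by (intro load_le) auto
  ultimately show ?thesis using eA eB by linarith
qed

lemma good_imp:
  assumes "good K A B"
  shows "improving_three_swap (Suc K) (\<lambda>j. 2^j) (insert K A) (insert K B)"
proof -
  from assms have sub: "A \<subseteq> {..<K}" "B \<subseteq> {..<K}" and c: "card ((A - B) \<union> (B - A)) = 3"
    unfolding good_def by auto
  have fA: "finite A" "finite B" using sub finite_subset by auto
  have "card (A - B) + card (B - A) = 3"
    using c card_Un_disjoint[of "A - B" "B - A"] fA by auto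
  moreover have "A - B \<subseteq> insert K A" "B - A \<subseteq> {0..<Suc K} - insert K A"
    "insert K B = (insert K A - (A - B)) \<union> (B - A)" using sub by auto
  ultimately have "three_swap (Suc K) (insert K A) (insert K B)"
    unfolding three_swap_def by blast
  moreover have "makespan (Suc K) (\<lambda>j. 2^j) (insert K B) < makespan (Suc K) (\<lambda>j. 2^j) (insert K A)"
    using makespan_eq[OF sub(1)] makespan_eq[OF sub(2)] good_less[OF assms] by simp
  ultimately show ?thesis unfolding improving_three_swap_def by blast
qed

lemma good_pow_imp:
  "(good K ^^ n) A B \<Longrightarrow> (improving_three_swap (Suc K) (\<lambda>j. 2^j) ^^ n) (insert K A) (insert K B)"
proof (induction n arbitrary: B)
  case 0 then show ?case by simp
next
  case (Suc n)
  then obtain C where "(good K ^^ n) A C" "good K C B" by auto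
  then show ?case using Suc good_imp by (meson relpowp_Suc_I)
qed

lemma reach_opt:
  "M \<subseteq> {0..<m} \<Longrightarrow> \<exists>j E. (improving_three_swap m p ^^ j) M E \<and> three_swap_optimal m p E"
proof (induction "card {M'. M' \<subseteq> {0..<m} \<and> makespan m p M' < makespan m p M}" arbitrary: M rule: less_induct)
  case less
  show ?case
  proof (cases "three_swap_optimal m p M")
    case True
    then show ?thesis by (intro exI[of _ 0]) auto
  next
    case False
    then obtain M' where imp: "improving_three_swap m p M M'" unfolding three_swap_optimal_def by blast
    then have M'sub: "M' \<subseteq> {0..<m}" and lt: "makespan m p M' < makespan m p M"
      using less.prems unfolding improving_three_swap_def three_swap_def by auto
    let ?S = "\<lambda>X. {M'. M' \<subseteq> {0..<m} \<and> makespan m p M' < makespan m p X}"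
    have "?S M' \<subset> ?S M" using lt M'sub by auto
    moreover have "finite (?S M)" by (rule finite_subset[of _ "Pow {0..<m}"]) auto
    ultimately have "card (?S M') < card (?S M)" by (rule psubset_card_mono[rotated])
    then obtain j E where "(improving_three_swap m p ^^ j) M' E" "three_swap_optimal m p E"
      using less.hyps M'sub by blast
    then show ?thesis using imp by (meson relpowp_Suc_I2)
  qed
qed


lemma key:
  fixes n :: nat assumes n4: "4 \<le> n"
  shows "\<exists>(p :: nat \<Rightarrow> real) (S :: nat \<Rightarrow> nat set) (k :: nat).
       (\<forall>j<3*n+1. p j > 0) \<and>
       is_schedule (3*n+1) (S 0) \<and>
       (\<forall>i<k. improving_three_swap (3*n+1) p (S i) (S (Suc i))) \<and>
       three_swap_optimal (3*n+1) p (S k) \<and>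
       real k \<ge> 2 powr (1 * real n)"
proof -
  define K where "K = 3 * n"
  have "3 \<le> K" using n4 K_def by auto
  then obtain L J' where h: "J' \<subseteq> {0,1}" "(good K ^^ L) (insert (K-1) {}) J'"
      "2 ^ ((K-3) div 2) \<le> L"
    using main[of K "{}"] by blast
  have c1: "(improving_three_swap (Suc K) (\<lambda>j. 2^j) ^^ L) (insert K {K-1}) (insert K J')"
    using good_pow_imp[OF h(2)] by simp
  have "insert K J' \<subseteq> {0..<Suc K}" using h(1) \<open>3 \<le> K\<close> by auto
  then obtain j E where c2: "(improving_three_swap (Suc K) (\<lambda>j. 2^j) ^^ j) (insert K J') E"
      "three_swap_optimal (Suc K) (\<lambda>j. 2^j) E"
    using reach_opt by blast
  have "(improving_three_swap (Suc K) (\<lambda>j. 2^j) ^^ (L + j)) (insert K {K-1}) E"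
    unfolding relpowp_add using c1 c2(1) by (rule relcomppI)
  then obtain f where f: "f 0 = insert K {K-1}" "f (L+j) = E"
      "\<forall>i<L+j. improving_three_swap (Suc K) (\<lambda>j. 2^j) (f i) (f (Suc i))"
    unfolding relpowp_fun_conv by blast
  have "n \<le> (K-3) div 2" using n4 unfolding K_def by presburger
  then have "(2::nat)^n \<le> 2 ^ ((K-3) div 2)" by (rule power_increasing) auto
  then have "(2::nat)^n \<le> L + j" using h(3) by linarith
  then have "real (2^n) \<le> real (L + j)" by (simp only: of_nat_le_iff)
  then have "(2::real)^n \<le> real (L + j)" by simp
  then have bound: "2 powr (1 * real n) \<le> real (L + j)" by (simp add: powr_realpow)
  have sched: "is_schedule (Suc K) (f 0)" unfolding is_schedule_def f(1) by auto
  have e: "3*n+1 = Suc K" by (simp add: K_def)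
  show ?thesis unfolding e
    apply (rule exI[of _ "\<lambda>j. 2^j"], rule exI[of _ f], rule exI[of _ "L+j"])
    using sched f(2,3) c2(2) bound by simp
qed

theorem theorem5:
  "\<exists>c::real. c > 0 \<and> (\<exists>N::nat. \<forall>n\<ge>N.
     \<exists>(p :: nat \<Rightarrow> real) (S :: nat \<Rightarrow> nat set) (k :: nat).
       (\<forall>j<3*n+1. p j > 0) \<and>
       is_schedule (3*n+1) (S 0) \<and>
       (\<forall>i<k. improving_three_swap (3*n+1) p (S i) (S (Suc i))) \<and>
       three_swap_optimal (3*n+1) p (S k) \<and>
       real k \<ge> 2 powr (c * real n))"
proof -
  have "\<exists>N::nat. \<forall>n\<ge>N.
     \<exists>(p :: nat \<Rightarrow> real) (S :: nat \<Rightarrow> nat set) (k :: nat).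
       (\<forall>j<3*n+1. p j > 0) \<and>
       is_schedule (3*n+1) (S 0) \<and>
       (\<forall>i<k. improving_three_swap (3*n+1) p (S i) (S (Suc i))) \<and>
       three_swap_optimal (3*n+1) p (S k) \<and>
       real k \<ge> 2 powr (1 * real n)"
    using key by blast
  then show ?thesis by (intro exI[of _ 1]) simp
qed

end
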